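(* $\mathsf{ICK}\oplus(p\mathrel{\Box\!\!\!\rightarrow} p)$ is sound and complete with respect to the class of conditional frames $(X,\leq,\mathcal{R})$ satisfying $R_a[x]\subseteq a$ for all $x\in X$ and all upsets $a$.
   Context: Formulas: $\phi ::= p\mid\bot\mid\phi\wedge\phi\mid\phi\vee\phi\mid\phi\to\phi\mid\phi\mathrel{\Box\!\!\!\rightarrow}\phi$. $\mathsf{ICK}\oplus\Gamma$ is the smallest set containing intuitionistic propositional logic, $\Gamma$, $(p\mathrel{\Box\!\!\!\rightarrow}(q\wedge r))\leftrightarrow((p\mathrel{\Box\!\!\!\rightarrow} q)\wedge(p\mathrel{\Box\!\!\!\rightarrow} r))$ and $(p\mathrel{\Box\!\!\!\rightarrow}\top)\leftrightarrow\top$, closed under uniform substitution, modus ponens and congruence rules for both arguments of $\mathrel{\Box\!\!\!\rightarrow}$. A conditional frame is $(X,\leq,\mathcal{R})$, $(X,\leq)$ a nonempty preorder, $\mathcal{R}=\{R_a\mid a\text{ an upset}\}$ with $(\leq\circ R_a)\subseteq(R_a\circ\leq)$; valuations assign upsets to letters and $x\models\phi\mathrel{\Box\!\!\!\rightarrow}\psi$ iff every $y$ with $xR_{V(\phi)}y$ satisfies $\psi$. $R_a[x]=\{y\mid xR_ay\}$. *)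

theory Defs
  imports Main
begin

datatype form =
    Atom nat
  | Bot
  | And form form
  | Or form form
  | Imp form form
  | Cond form form

definition Top :: form where "Top = Imp Bot Bot"

definition Iff :: "form \<Rightarrow> form \<Rightarrow> form" where
  "Iff a b = And (Imp a b) (Imp b a)"

primrec subst :: "(nat \<Rightarrow> form) \<Rightarrow> form \<Rightarrow> form" where
  "subst s (Atom n) = s n"
| "subst s Bot = Bot"
| "subst s (And a b) = And (subst s a) (subst s b)"
| "subst s (Or a b) = Or (subst s a) (subst s b)"
| "subst s (Imp a b) = Imp (subst s a) (subst s b)"
| "subst s (Cond a b) = Cond (subst s a) (subst s b)"

inductive_set ICK :: "form set \<Rightarrow> form set" for \<Gamma> :: "form set" where
  ax_K: "Imp a (Imp b a) \<in> ICK \<Gamma>"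
| ax_S: "Imp (Imp a (Imp b c)) (Imp (Imp a b) (Imp a c)) \<in> ICK \<Gamma>"
| ax_conjE1: "Imp (And a b) a \<in> ICK \<Gamma>"
| ax_conjE2: "Imp (And a b) b \<in> ICK \<Gamma>"
| ax_conjI: "Imp a (Imp b (And a b)) \<in> ICK \<Gamma>"
| ax_disjI1: "Imp a (Or a b) \<in> ICK \<Gamma>"
| ax_disjI2: "Imp b (Or a b) \<in> ICK \<Gamma>"
| ax_disjE: "Imp (Imp a c) (Imp (Imp b c) (Imp (Or a b) c)) \<in> ICK \<Gamma>"
| ax_efq: "Imp Bot a \<in> ICK \<Gamma>"
| ax_gamma: "g \<in> \<Gamma> \<Longrightarrow> g \<in> ICK \<Gamma>"
| ax_C: "Iff (Cond (Atom 0) (And (Atom 1) (Atom 2)))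
             (And (Cond (Atom 0) (Atom 1)) (Cond (Atom 0) (Atom 2))) \<in> ICK \<Gamma>"
| ax_N: "Iff (Cond (Atom 0) Top) Top \<in> ICK \<Gamma>"
| us: "a \<in> ICK \<Gamma> \<Longrightarrow> subst s a \<in> ICK \<Gamma>"
| mp: "Imp a b \<in> ICK \<Gamma> \<Longrightarrow> a \<in> ICK \<Gamma> \<Longrightarrow> b \<in> ICK \<Gamma>"
| cong_l: "Iff a b \<in> ICK \<Gamma> \<Longrightarrow> Iff (Cond a c) (Cond b c) \<in> ICK \<Gamma>"
| cong_r: "Iff c d \<in> ICK \<Gamma> \<Longrightarrow> Iff (Cond a c) (Cond a d) \<in> ICK \<Gamma>"

definition ICK_id :: "form set" where
  "ICK_id = ICK {Cond (Atom 0) (Atom 0)}"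

text \<open>A frame: carrier X, preorder le on X, and for every set a a relation R a;
only the R a for upsets a of (X, le) matter.\<close>

definition upset :: "'w set \<Rightarrow> ('w \<Rightarrow> 'w \<Rightarrow> bool) \<Rightarrow> 'w set \<Rightarrow> bool" where
  "upset X le a \<longleftrightarrow> a \<subseteq> X \<and> (\<forall>x\<in>a. \<forall>y\<in>X. le x y \<longrightarrow> y \<in> a)"

text \<open>The condition (\<le> \<circ> R_a) \<subseteq> (R_a \<circ> \<le>) is read in diagrammatic order:
 if x \<le> x' and x' R_a y' then there is y with x R_a y and y \<le> y'.\<close>

definition cond_frame :: "'w set \<Rightarrow> ('w \<Rightarrow> 'w \<Rightarrow> bool) \<Rightarrow> ('w set \<Rightarrow> 'w \<Rightarrow> 'w \<Rightarrow> bool) \<Rightarrow> bool" where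
  "cond_frame X le R \<longleftrightarrow>
     X \<noteq> {} \<and>
     (\<forall>x\<in>X. le x x) \<and>
     (\<forall>x\<in>X. \<forall>y\<in>X. \<forall>z\<in>X. le x y \<longrightarrow> le y z \<longrightarrow> le x z) \<and>
     (\<forall>a. upset X le a \<longrightarrow>
        (\<forall>x y. R a x y \<longrightarrow> x \<in> X \<and> y \<in> X) \<and>
        (\<forall>x\<in>X. \<forall>x'\<in>X. \<forall>y'\<in>X. le x x' \<longrightarrow> R a x' y' \<longrightarrow>
           (\<exists>y\<in>X. R a x y \<and> le y y')))"

primrec sat :: "'w set \<Rightarrow> ('w \<Rightarrow> 'w \<Rightarrow> bool) \<Rightarrow> ('w set \<Rightarrow> 'w \<Rightarrow> 'w \<Rightarrow> bool)
                 \<Rightarrow> (nat \<Rightarrow> 'w set) \<Rightarrow> 'w \<Rightarrow> form \<Rightarrow> bool" where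
  "sat X le R V x (Atom n) = (x \<in> V n)"
| "sat X le R V x Bot = False"
| "sat X le R V x (And a b) = (sat X le R V x a \<and> sat X le R V x b)"
| "sat X le R V x (Or a b) = (sat X le R V x a \<or> sat X le R V x b)"
| "sat X le R V x (Imp a b) =
     (\<forall>y\<in>X. le x y \<longrightarrow> sat X le R V y a \<longrightarrow> sat X le R V y b)"
| "sat X le R V x (Cond a b) =
     (\<forall>y. R {z\<in>X. sat X le R V z a} x y \<longrightarrow> sat X le R V y b)"

definition valid_frame :: "'w set \<Rightarrow> ('w \<Rightarrow> 'w \<Rightarrow> bool) \<Rightarrow> ('w set \<Rightarrow> 'w \<Rightarrow> 'w \<Rightarrow> bool)
                            \<Rightarrow> form \<Rightarrow> bool" where
  "valid_frame X le R \<phi> \<longleftrightarrow>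
     (\<forall>V. (\<forall>n. upset X le (V n)) \<longrightarrow> (\<forall>x\<in>X. sat X le R V x \<phi>))"

definition id_frame :: "'w set \<Rightarrow> ('w \<Rightarrow> 'w \<Rightarrow> bool) \<Rightarrow> ('w set \<Rightarrow> 'w \<Rightarrow> 'w \<Rightarrow> bool) \<Rightarrow> bool" where
  "id_frame X le R \<longleftrightarrow>
     cond_frame X le R \<and> (\<forall>a. upset X le a \<longrightarrow> (\<forall>x\<in>X. {y. R a x y} \<subseteq> a))"

definition valid_class :: "'w itself \<Rightarrow> form \<Rightarrow> bool" where
  "valid_class _ \<phi> \<longleftrightarrow>
     (\<forall>(X::'w set) le R. id_frame X le R \<longrightarrow> valid_frame X le R \<phi>)"

end

theory Submission
  imports Defs
begin
lemma cf_refl: "cond_frame X le R \<Longrightarrow> x\<in>X \<Longrightarrow> le x x"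
  unfolding cond_frame_def by simp
lemma cf_R00: "cond_frame X le R \<Longrightarrow> (\<forall>a. upset X le a \<longrightarrow>
        (\<forall>x y. R a x y \<longrightarrow> x \<in> X \<and> y \<in> X) \<and>
        (\<forall>x\<in>X. \<forall>x'\<in>X. \<forall>y'\<in>X. le x x' \<longrightarrow> R a x' y' \<longrightarrow>
           (\<exists>y\<in>X. R a x y \<and> le y y')))"
  unfolding cond_frame_def by (elim conjE) assumption
lemma cf_trans0: "cond_frame X le R \<Longrightarrow> (\<forall>x\<in>X. \<forall>y\<in>X. \<forall>z\<in>X. le x y \<longrightarrow> le y z \<longrightarrow> le x z)"
  unfolding cond_frame_def by (elim conjE) assumption
lemma cf_back: "cond_frame X le R \<Longrightarrow> upset X le a \<Longrightarrow> x\<in>X \<Longrightarrow> x'\<in>X \<Longrightarrow> y'\<in>X \<Longrightarrow> le x x' \<Longrightarrow> R a x' y'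
   \<Longrightarrow> \<exists>y\<in>X. R a x y \<and> le y y'"
proof -
  assume a: "cond_frame X le R" "upset X le a" "x\<in>X" "x'\<in>X" "y'\<in>X" "le x x'" "R a x' y'"
  have "\<forall>x\<in>X. \<forall>x'\<in>X. \<forall>y'\<in>X. le x x' \<longrightarrow> R a x' y' \<longrightarrow> (\<exists>y\<in>X. R a x y \<and> le y y')"
    using cf_R00[OF a(1)] a(2) by simp
  then show ?thesis using a(3-) by simp
qed

lemma cf_trans: "cond_frame X le R \<Longrightarrow> x\<in>X \<Longrightarrow> y\<in>X \<Longrightarrow> z\<in>X \<Longrightarrow> le x y \<Longrightarrow> le y z \<Longrightarrow> le x z"
  using cf_trans0 by blast
lemma cf_R: "cond_frame X le R \<Longrightarrow> upset X le a \<Longrightarrow> R a x y \<Longrightarrow> x\<in>X \<and> y\<in>X"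
  using cf_R00 by blast

lemma sat_upset:
  assumes cf: "cond_frame X le R" and V: "\<forall>n::nat. upset X le (V n)"
  shows "upset X le {z\<in>X. sat X le R V z \<phi>}"
proof (induction \<phi>)
  case (Atom n)
  then show ?case using V unfolding upset_def by auto
next
  case Bot
  then show ?case unfolding upset_def by auto
next
  case (And a b)
  then show ?case unfolding upset_def by auto
next
  case (Or a b)
  then show ?case unfolding upset_def by auto
next
  case (Imp a b)
  show ?case unfolding upset_def
  proof (intro conjI ballI impI)
    fix x y assume x: "x \<in> {z \<in> X. sat X le R V z (Imp a b)}" and y: "y\<in>X" "le x y"
    have xX: "x \<in> X" and sx: "\<forall>z\<in>X. le x z \<longrightarrow> sat X le R V z a \<longrightarrow> sat X le R V z b" using x by simp_all
    have "sat X le R V y (Imp a b)" unfolding sat.simps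
    proof (intro ballI impI)
      fix z assume z: "z\<in>X" "le y z" "sat X le R V z a"
      have "le x z" using cf_trans[OF cf xX y(1) z(1) y(2) z(2)] .
      then show "sat X le R V z b" using sx z by blast
    qed
    then show "y \<in> {z \<in> X. sat X le R V z (Imp a b)}" using y by simp
  qed blast
next
  case (Cond a b)
  let ?A = "{z\<in>X. sat X le R V z a}"
  have up: "upset X le ?A" by fact
  show ?case unfolding upset_def
  proof (intro conjI ballI impI)
    fix x x' assume x: "x \<in> {z \<in> X. sat X le R V z (Cond a b)}" and x': "x'\<in>X" "le x x'"
    have xX: "x \<in> X" and sx: "\<forall>y. R ?A x y \<longrightarrow> sat X le R V y b" using x by simp_all
    have "sat X le R V y' b" if yy: "R ?A x' y'" for y'
    proof -
      have y'X: "y' \<in> X" using cf_R[OF cf up yy] by blast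
      obtain y where y: "y\<in>X" "R ?A x y" "le y y'" using cf_back[OF cf up xX x'(1) y'X x'(2) yy] by blast
      then have "sat X le R V y b" using sx by blast
      moreover have "upset X le {z\<in>X. sat X le R V z b}" by fact
      ultimately show ?thesis using y y'X unfolding upset_def by blast
    qed
    then show "x' \<in> {z \<in> X. sat X le R V z (Cond a b)}" using x' by simp
  qed blast
qed

lemma persist:
  assumes "cond_frame X le R" "\<forall>n::nat. upset X le (V n)" "x\<in>X" "y\<in>X" "le x y" "sat X le R V x \<phi>"
  shows "sat X le R V y \<phi>"
  using sat_upset[OF assms(1,2), of \<phi>] assms(3-) unfolding upset_def by blast

lemma sat_subst:
  assumes cf: "cond_frame X le R" and V: "\<forall>n::nat. upset X le (V n)" and x: "x \<in> X"
  shows "sat X le R V x (subst s \<phi>) = sat X le R (\<lambda>n. {z\<in>X. sat X le R V z (s n)}) x \<phi>"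
  using x
proof (induction \<phi> arbitrary: x)
  case (Cond a b)
  let ?V' = "\<lambda>n. {z\<in>X. sat X le R V z (s n)}"
  have eq: "{z\<in>X. sat X le R V z (subst s a)} = {z\<in>X. sat X le R ?V' z a}"
    using Cond.IH(1) by auto
  have up: "upset X le {z\<in>X. sat X le R V z (subst s a)}" by (rule sat_upset[OF cf V])
  have inX: "\<And>y. R {z\<in>X. sat X le R V z (subst s a)} x y \<Longrightarrow> y \<in> X"
    using cf_R[OF cf up] by blast
  show ?case using Cond.IH(2) inX by (simp add: eq[symmetric])
qed auto

definition valid :: "'w set \<Rightarrow> ('w \<Rightarrow> 'w \<Rightarrow> bool) \<Rightarrow> ('w set \<Rightarrow> 'w \<Rightarrow> 'w \<Rightarrow> bool) \<Rightarrow> form \<Rightarrow> bool" where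
  "valid X le R \<phi> \<longleftrightarrow> (\<forall>V. (\<forall>n::nat. upset X le (V n)) \<longrightarrow> (\<forall>x\<in>X. sat X le R V x \<phi>))"

lemma validD:
  assumes "valid X le R \<phi>" "\<forall>n::nat. upset X le (V n)" "x\<in>X"
  shows "sat X le R V x \<phi>"
proof -
  have h: "\<forall>V. (\<forall>n::nat. upset X le (V n)) \<longrightarrow> (\<forall>x\<in>X. sat X le R V x \<phi>)"
    using assms(1) unfolding valid_def .
  show ?thesis using spec[OF h, of V] assms(2,3) by blast
qed

lemma valid_iffD:
  assumes "cond_frame X le R" "valid X le R (Iff a b)" "\<forall>n::nat. upset X le (V n)" "x\<in>X"
  shows "sat X le R V x a = sat X le R V x b"
proof -
  have r: "le x x" by (rule cf_refl[OF assms(1,4)])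
  have h: "\<forall>V. (\<forall>n::nat. upset X le (V n)) \<longrightarrow> (\<forall>x\<in>X. sat X le R V x (Iff a b))"
    using assms(2) unfolding valid_def .
  have "sat X le R V x (Iff a b)" using spec[OF h, of V] assms(3,4) by blast
  then have "(\<forall>y\<in>X. le x y \<longrightarrow> sat X le R V y a \<longrightarrow> sat X le R V y b) \<and> (\<forall>y\<in>X. le x y \<longrightarrow> sat X le R V y b \<longrightarrow> sat X le R V y a)"
    unfolding Iff_def by simp
  then show ?thesis using r assms(4) by blast
qed

lemma sat_Top[simp]: "sat X le R V x Top" by (simp add: Top_def)

lemma idf_cf: "id_frame X le R \<Longrightarrow> cond_frame X le R"
  unfolding id_frame_def by (elim conjE) assumption
lemma idf_sub0: "id_frame X le R \<Longrightarrow> (\<forall>a. upset X le a \<longrightarrow> (\<forall>x\<in>X. {y. R a x y} \<subseteq> a))"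
  unfolding id_frame_def by (elim conjE) assumption
lemma idf_sub: "id_frame X le R \<Longrightarrow> upset X le a \<Longrightarrow> x\<in>X \<Longrightarrow> R a x y \<Longrightarrow> y \<in> a"
proof -
  assume "id_frame X le R" "upset X le a" "x\<in>X" "R a x y"
  then have "\<forall>x\<in>X. {y. R a x y} \<subseteq> a" using idf_sub0[of X le R] by blast
  then show ?thesis using \<open>x\<in>X\<close> \<open>R a x y\<close> by auto
qed

lemma soundness:
  assumes idf: "id_frame X le R" and phi: "\<phi> \<in> ICK_id"
  shows "valid X le R \<phi>"
proof -
  have cf: "cond_frame X le R" using idf_cf[OF idf] .
  have refl: "\<forall>x\<in>X. le x x" using cf_refl[OF cf] by (intro ballI)
  have tr: "\<forall>x\<in>X. \<forall>y\<in>X. \<forall>z\<in>X. le x y \<longrightarrow> le y z \<longrightarrow> le x z"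
    using cf_trans0[OF cf] .
  note P = persist[OF cf]
  from phi show ?thesis unfolding ICK_id_def
  proof (induction rule: ICK.induct)
    case (ax_K a b)
    show ?case unfolding valid_def
    proof (intro allI impI ballI)
      fix V x assume V: "\<forall>n::nat. upset X le (V n)" and x: "x\<in>X"
      show "sat X le R V x (Imp a (Imp b a))"
      proof (simp, intro ballI impI)
        fix y z assume "y\<in>X" "le x y" "sat X le R V y a" "z\<in>X" "le y z"
        then show "sat X le R V z a" using P[OF V, of y z a] by blast
      qed
    qed
  next
    case (ax_S a b c)
    show ?case unfolding valid_def
    proof (intro allI impI ballI)
      fix V x assume V: "\<forall>n::nat. upset X le (V n)" and x: "x\<in>X"
      show "sat X le R V x (Imp (Imp a (Imp b c)) (Imp (Imp a b) (Imp a c)))"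
      proof (unfold sat.simps, intro ballI impI)
        fix y z w assume y: "y\<in>X" "le x y" "\<forall>z\<in>X. le y z \<longrightarrow> sat X le R V z a \<longrightarrow> (\<forall>w\<in>X. le z w \<longrightarrow> sat X le R V w b \<longrightarrow> sat X le R V w c)"
          and z: "z\<in>X" "le y z" "\<forall>w\<in>X. le z w \<longrightarrow> sat X le R V w a \<longrightarrow> sat X le R V w b"
          and w: "w\<in>X" "le z w" "sat X le R V w a"
        have yw: "le y w" using tr y z w by blast
        have "sat X le R V w b" using z w refl by blast
        then show "sat X le R V w c" using y(3) w yw refl by blast
      qed
    qed
  next
    case (ax_disjE a c b)
    show ?case unfolding valid_def
    proof (intro allI impI ballI)
      fix V x assume V: "\<forall>n::nat. upset X le (V n)" and x: "x\<in>X"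
      show "sat X le R V x (Imp (Imp a c) (Imp (Imp b c) (Imp (Or a b) c)))"
      proof (unfold sat.simps, intro ballI impI)
        fix y z w assume y: "y\<in>X" "le x y" "\<forall>w\<in>X. le y w \<longrightarrow> sat X le R V w a \<longrightarrow> sat X le R V w c"
          and z: "z\<in>X" "le y z" "\<forall>w\<in>X. le z w \<longrightarrow> sat X le R V w b \<longrightarrow> sat X le R V w c"
          and w: "w\<in>X" "le z w" "sat X le R V w a \<or> sat X le R V w b"
        have yw: "le y w" using tr y z w by blast
        show "sat X le R V w c" using y z w yw by blast
      qed
    qed
  next
    case (ax_conjI a b)
    show ?case unfolding valid_def
    proof (intro allI impI ballI)
      fix V x assume V: "\<forall>n::nat. upset X le (V n)" and x: "x\<in>X"
      show "sat X le R V x (Imp a (Imp b (And a b)))"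
      proof (simp, intro ballI impI)
        fix y z assume "y\<in>X" "le x y" "sat X le R V y a" "z\<in>X" "le y z"
        then show "sat X le R V z a" using P[OF V, of y z a] by blast
      qed
    qed
  next
    case (ax_gamma g)
    then have g: "g = Cond (Atom 0) (Atom 0)" by simp
    show ?case unfolding valid_def g
    proof (intro allI impI ballI)
      fix V x assume V: "\<forall>n::nat. upset X le (V n)" and x: "x\<in>X"
      have "{z\<in>X. z \<in> V 0} = V 0" using V unfolding upset_def by auto
      moreover have "{y. R (V 0) x y} \<subseteq> V 0" using idf_sub[OF idf] V x by blast
      ultimately show "sat X le R V x (Cond (Atom 0) (Atom 0))" by auto
    qed
  next
    case ax_C
    show ?case unfolding valid_def Iff_def sat.simps by blast
  next
    case ax_N
    show ?case unfolding valid_def Iff_def by simp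
  next
    case (us a s)
    show ?case unfolding valid_def
    proof (intro allI impI ballI)
      fix V x assume V: "\<forall>n::nat. upset X le (V n)" and x: "x\<in>X"
      have "\<forall>n::nat. upset X le {z\<in>X. sat X le R V z (s n)}" using sat_upset[OF cf V] by blast
      moreover have h: "\<forall>V. (\<forall>n::nat. upset X le (V n)) \<longrightarrow> (\<forall>x\<in>X. sat X le R V x a)"
        using us.IH unfolding valid_def .
      ultimately have "sat X le R (\<lambda>n. {z\<in>X. sat X le R V z (s n)}) x a"
        using spec[OF h, of "\<lambda>n. {z\<in>X. sat X le R V z (s n)}"] x by blast
      then show "sat X le R V x (subst s a)" using sat_subst[OF cf V x] by simp
    qed
  next
    case (mp a b)
    show ?case unfolding valid_def
    proof (intro allI impI ballI)
      fix V x assume V: "\<forall>n::nat. upset X le (V n)" and x: "x\<in>X"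
      have "sat X le R V x (Imp a b)" "sat X le R V x a" using validD[OF mp.IH(1) V x] validD[OF mp.IH(2) V x] by auto
      then show "sat X le R V x b" using x refl by simp
    qed
  next
    case (cong_l a b c)
    show ?case unfolding valid_def
    proof (intro allI impI ballI)
      fix V x assume V: "\<forall>n::nat. upset X le (V n)" and x: "x\<in>X"
      have "{z\<in>X. sat X le R V z a} = {z\<in>X. sat X le R V z b}"
        using valid_iffD[OF cf cong_l.IH V] by auto
      then show "sat X le R V x (Iff (Cond a c) (Cond b c))" unfolding Iff_def by simp
    qed
  next
    case (cong_r c d a)
    show ?case unfolding valid_def
    proof (intro allI impI ballI)
      fix V x assume V: "\<forall>n::nat. upset X le (V n)" and x: "x\<in>X"
      let ?A = "{z\<in>X. sat X le R V z a}"
      have up: "upset X le ?A" by (rule sat_upset[OF cf V])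
      have eqv: "sat X le R V z c = sat X le R V z d" if "R ?A y z" for y z
        using valid_iffD[OF cf cong_r.IH V] cf_R[OF cf up that] by blast
      have e: "\<And>y. sat X le R V y (Cond a c) = sat X le R V y (Cond a d)"
        using eqv by auto
      show "sat X le R V x (Iff (Cond a c) (Cond a d))" unfolding Iff_def sat.simps(3) sat.simps(5) e by simp
    qed
  next
    case (ax_conjE1 a b) show ?case unfolding valid_def sat.simps by blast
  next
    case (ax_conjE2 a b) show ?case unfolding valid_def sat.simps by blast
  next
    case (ax_disjI1 a b) show ?case unfolding valid_def sat.simps by blast
  next
    case (ax_disjI2 a b) show ?case unfolding valid_def sat.simps by blast
  next
    case (ax_efq a) show ?case unfolding valid_def sat.simps by blast
  qed
qed



inductive deriv :: "form set \<Rightarrow> form \<Rightarrow> bool" for G :: "form set" where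
  d_L: "\<phi> \<in> ICK_id \<Longrightarrow> deriv G \<phi>"
| d_hyp: "\<phi> \<in> G \<Longrightarrow> deriv G \<phi>"
| d_mp: "deriv G (Imp a b) \<Longrightarrow> deriv G a \<Longrightarrow> deriv G b"

lemma L_K: "Imp a (Imp b a) \<in> ICK_id" unfolding ICK_id_def by (rule ICK.ax_K)
lemma L_S: "Imp (Imp a (Imp b c)) (Imp (Imp a b) (Imp a c)) \<in> ICK_id" unfolding ICK_id_def by (rule ICK.ax_S)
lemma L_conjE1: "Imp (And a b) a \<in> ICK_id" unfolding ICK_id_def by (rule ICK.ax_conjE1)
lemma L_conjE2: "Imp (And a b) b \<in> ICK_id" unfolding ICK_id_def by (rule ICK.ax_conjE2)
lemma L_conjI: "Imp a (Imp b (And a b)) \<in> ICK_id" unfolding ICK_id_def by (rule ICK.ax_conjI)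
lemma L_disjI1: "Imp a (Or a b) \<in> ICK_id" unfolding ICK_id_def by (rule ICK.ax_disjI1)
lemma L_disjI2: "Imp b (Or a b) \<in> ICK_id" unfolding ICK_id_def by (rule ICK.ax_disjI2)
lemma L_disjE: "Imp (Imp a c) (Imp (Imp b c) (Imp (Or a b) c)) \<in> ICK_id" unfolding ICK_id_def by (rule ICK.ax_disjE)
lemma L_efq: "Imp Bot a \<in> ICK_id" unfolding ICK_id_def by (rule ICK.ax_efq)
lemma L_mp: "Imp a b \<in> ICK_id \<Longrightarrow> a \<in> ICK_id \<Longrightarrow> b \<in> ICK_id" unfolding ICK_id_def by (rule ICK.mp)
lemma L_cong_l: "Iff a b \<in> ICK_id \<Longrightarrow> Iff (Cond a c) (Cond b c) \<in> ICK_id" unfolding ICK_id_def by (rule ICK.cong_l)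
lemma L_cong_r: "Iff c d \<in> ICK_id \<Longrightarrow> Iff (Cond a c) (Cond a d) \<in> ICK_id" unfolding ICK_id_def by (rule ICK.cong_r)

lemma L_C: "Iff (Cond c (And a b)) (And (Cond c a) (Cond c b)) \<in> ICK_id"
proof -
  have "subst (\<lambda>n. if n = 0 then c else if n = 1 then a else b)
     (Iff (Cond (Atom 0) (And (Atom 1) (Atom 2))) (And (Cond (Atom 0) (Atom 1)) (Cond (Atom 0) (Atom 2)))) \<in> ICK_id"
    unfolding ICK_id_def by (rule ICK.us[OF ICK.ax_C])
  then show ?thesis by (simp add: Iff_def)
qed

lemma subst_Top[simp]: "subst s Top = Top" by (simp add: Top_def)

lemma L_N: "Iff (Cond c Top) Top \<in> ICK_id"
proof -
  have "subst (\<lambda>n. c) (Iff (Cond (Atom 0) Top) Top) \<in> ICK_id"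
    unfolding ICK_id_def by (rule ICK.us[OF ICK.ax_N])
  then show ?thesis by (simp add: Iff_def)
qed

lemma L_id: "Cond c c \<in> ICK_id"
proof -
  have "subst (\<lambda>n. c) (Cond (Atom 0) (Atom 0)) \<in> ICK_id"
    unfolding ICK_id_def by (rule ICK.us[OF ICK.ax_gamma]) simp
  then show ?thesis by simp
qed

lemma L_I: "Imp a a \<in> ICK_id"
  by (rule L_mp[OF L_mp[OF L_S L_K] L_K[of a a]])

lemma L_Top: "Top \<in> ICK_id" unfolding Top_def by (rule L_I)

lemma deriv_mono: "deriv G \<phi> \<Longrightarrow> G \<subseteq> H \<Longrightarrow> deriv H \<phi>"
  by (induction rule: deriv.induct) (auto intro: deriv.intros)

lemma deduction: "deriv (insert a G) b \<Longrightarrow> deriv G (Imp a b)"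
proof (induction rule: deriv.induct)
  case (d_L \<phi>)
  then show ?case by (meson L_K deriv.d_L deriv.d_mp)
next
  case (d_hyp \<phi>)
  then show ?case by (metis L_I L_K deriv.d_L deriv.d_hyp deriv.d_mp insertE)
next
  case (d_mp x y)
  then show ?case by (meson L_S deriv.d_L deriv.d_mp)
qed

lemma deriv_empty: "deriv {} \<phi> \<Longrightarrow> \<phi> \<in> ICK_id"
  by (induction rule: deriv.induct) (auto intro: L_mp)

lemma deriv_compact: "deriv G \<phi> \<Longrightarrow> \<exists>F. finite F \<and> F \<subseteq> G \<and> deriv F \<phi>"
proof (induction rule: deriv.induct)
  case (d_L \<phi>)
  then show ?case by (meson deriv.d_L empty_subsetI finite.emptyI)
next
  case (d_hyp \<phi>)
  then show ?case by (meson deriv.d_hyp empty_subsetI finite.emptyI finite.insertI insertI1 insert_subset)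
next
  case (d_mp a b)
  then obtain F1 F2 where "finite F1" "F1 \<subseteq> G" "deriv F1 (Imp a b)" "finite F2" "F2 \<subseteq> G" "deriv F2 a" by blast
  then show ?case
    by (meson deriv.d_mp deriv_mono finite_UnI le_sup_iff sup.cobounded1 sup.cobounded2)
qed

lemma dAndI: "deriv G a \<Longrightarrow> deriv G b \<Longrightarrow> deriv G (And a b)"
  by (meson L_conjI deriv.d_L deriv.d_mp)
lemma dAndE1: "deriv G (And a b) \<Longrightarrow> deriv G a"
  by (meson L_conjE1 deriv.d_L deriv.d_mp)
lemma dAndE2: "deriv G (And a b) \<Longrightarrow> deriv G b"
  by (meson L_conjE2 deriv.d_L deriv.d_mp)
lemma dIffI: "deriv G (Imp a b) \<Longrightarrow> deriv G (Imp b a) \<Longrightarrow> deriv G (Iff a b)"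
  unfolding Iff_def by (rule dAndI)
lemma dIffE1: "deriv G (Iff a b) \<Longrightarrow> deriv G a \<Longrightarrow> deriv G b"
  unfolding Iff_def by (meson dAndE1 deriv.d_mp)
lemma dIffE2: "deriv G (Iff a b) \<Longrightarrow> deriv G b \<Longrightarrow> deriv G a"
  unfolding Iff_def by (meson dAndE2 deriv.d_mp)

lemma L_mono_cond:
  assumes ab: "Imp a b \<in> ICK_id"
  shows "Imp (Cond c a) (Cond c b) \<in> ICK_id"
proof -
  have "deriv {a} (And a b)"
    by (meson ab dAndI deriv.d_L deriv.d_hyp deriv.d_mp singletonI)
  then have "deriv {} (Imp a (And a b))" using deduction by blast
  moreover have "deriv {} (Imp (And a b) a)" by (rule d_L[OF L_conjE1])
  ultimately have "Iff a (And a b) \<in> ICK_id" using dIffI deriv_empty by blast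
  then have e: "Iff (Cond c a) (Cond c (And a b)) \<in> ICK_id" by (rule L_cong_r)
  have "deriv {Cond c a} (Cond c (And a b))"
    by (meson dIffE1 d_L d_hyp e singletonI)
  then have "deriv {Cond c a} (And (Cond c a) (Cond c b))"
    by (meson dIffE1 d_L L_C)
  then have "deriv {Cond c a} (Cond c b)" by (rule dAndE2)
  then show ?thesis using deduction deriv_empty by blast
qed

definition is_thy :: "form set \<Rightarrow> bool" where
  "is_thy T \<longleftrightarrow> (\<forall>\<phi>. deriv T \<phi> \<longrightarrow> \<phi> \<in> T)"
definition pthy :: "form set \<Rightarrow> bool" where
  "pthy T \<longleftrightarrow> is_thy T \<and> Bot \<notin> T \<and> (\<forall>a b. Or a b \<in> T \<longrightarrow> a \<in> T \<or> b \<in> T)"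

lemma thy_in: "is_thy T \<Longrightarrow> deriv T \<phi> \<Longrightarrow> \<phi> \<in> T"
  unfolding is_thy_def by blast

lemma lindenbaum:
  assumes nd: "\<not> deriv T \<psi>"
  shows "\<exists>D. pthy D \<and> T \<subseteq> D \<and> \<psi> \<notin> D"
proof -
  let ?A = "{D. T \<subseteq> D \<and> \<not> deriv D \<psi>}"
  have ne: "?A \<noteq> {}" using nd by blast
  have ch: "\<Union>C \<in> ?A" if Cne: "C \<noteq> {}" and Cch: "subset.chain ?A C" for C
  proof -
    have CA: "C \<subseteq> ?A" using that(2) unfolding subset.chain_def by blast
    have "T \<subseteq> \<Union>C" using CA that(1) by blast
    moreover have "\<not> deriv (\<Union>C) \<psi>"
    proof
      assume "deriv (\<Union>C) \<psi>"
      then obtain F where F: "finite F" "F \<subseteq> \<Union>C" "deriv F \<psi>" using deriv_compact by blast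
      then obtain B where "B \<in> C" "F \<subseteq> B" using finite_subset_Union_chain[OF F(1,2) Cne Cch] by blast
      then have "deriv B \<psi>" using F(3) deriv_mono by blast
      then show False using CA \<open>B\<in>C\<close> by blast
    qed
    ultimately show ?thesis by blast
  qed
  from subset_Zorn_nonempty[OF ne ch] obtain M where M: "M \<in> ?A" and mx: "\<forall>X\<in>?A. M \<subseteq> X \<longrightarrow> X = M" ..
  have ins: "\<chi> \<in> M" if "\<not> deriv (insert \<chi> M) \<psi>" for \<chi>
  proof -
    have "insert \<chi> M \<in> ?A" using M that by blast
    then have "insert \<chi> M = M" using mx[rule_format, of "insert \<chi> M"] by blast
    then show ?thesis by blast
  qed
  have thy: "is_thy M" unfolding is_thy_def
  proof (intro allI impI)
    fix \<chi> assume "deriv M \<chi>"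
    show "\<chi> \<in> M"
    proof (rule ins, rule notI)
      assume "deriv (insert \<chi> M) \<psi>"
      then have "deriv M (Imp \<chi> \<psi>)" by (rule deduction)
      then have "deriv M \<psi>" using \<open>deriv M \<chi>\<close> by (rule d_mp)
      then show False using M by blast
    qed
  qed
  have psi: "\<psi> \<notin> M" using M d_hyp by blast
  have bot: "Bot \<notin> M"
  proof
    assume "Bot \<in> M"
    then have "deriv M \<psi>" by (meson L_efq d_L d_hyp d_mp)
    then show False using M by blast
  qed
  have pr: "a \<in> M \<or> b \<in> M" if "Or a b \<in> M" for a b
  proof (rule ccontr)
    assume "\<not> (a \<in> M \<or> b \<in> M)"
    then have "deriv (insert a M) \<psi>" "deriv (insert b M) \<psi>" using ins by blast+
    then have "deriv M (Imp a \<psi>)" "deriv M (Imp b \<psi>)" using deduction by blast+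
    then have "deriv M \<psi>" using that by (meson L_disjE d_L d_hyp d_mp)
    then show False using M by blast
  qed
  have "pthy M" unfolding pthy_def using thy bot pr by blast
  then show ?thesis using M psi by blast
qed



definition CX :: "form set set" where "CX = {T. pthy T}"
definition CR :: "form set set \<Rightarrow> form set \<Rightarrow> form set \<Rightarrow> bool" where
  "CR a T D \<longleftrightarrow> T \<in> CX \<and> D \<in> CX \<and> (\<exists>\<phi>. a = {\<Theta>\<in>CX. \<phi>\<in>\<Theta>} \<and> (\<forall>\<psi>. Cond \<phi> \<psi> \<in> T \<longrightarrow> \<psi> \<in> D))"
definition CV :: "nat \<Rightarrow> form set set" where "CV n = {T\<in>CX. Atom n \<in> T}"

lemma CX_deriv: "T \<in> CX \<Longrightarrow> deriv T \<phi> \<Longrightarrow> \<phi> \<in> T"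
  unfolding CX_def pthy_def is_thy_def by blast
lemma CX_L: "T \<in> CX \<Longrightarrow> \<phi> \<in> ICK_id \<Longrightarrow> \<phi> \<in> T"
  using CX_deriv d_L by blast
lemma CX_mp: "T \<in> CX \<Longrightarrow> Imp a b \<in> T \<Longrightarrow> a \<in> T \<Longrightarrow> b \<in> T"
  using CX_deriv d_hyp d_mp by meson
lemma CX_LI: "T \<in> CX \<Longrightarrow> Imp a b \<in> ICK_id \<Longrightarrow> a \<in> T \<Longrightarrow> b \<in> T"
  using CX_L CX_mp by blast
lemma CX_bot: "T \<in> CX \<Longrightarrow> Bot \<notin> T"
  unfolding CX_def pthy_def by blast
lemma CX_or: "T \<in> CX \<Longrightarrow> Or a b \<in> T \<longleftrightarrow> a \<in> T \<or> b \<in> T"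
  unfolding CX_def pthy_def using CX_LI[OF _ L_disjI1] CX_LI[OF _ L_disjI2] unfolding CX_def pthy_def by blast
lemma CX_and: "T \<in> CX \<Longrightarrow> And a b \<in> T \<longleftrightarrow> a \<in> T \<and> b \<in> T"
  by (meson CX_LI CX_deriv L_conjE1 L_conjE2 dAndI d_hyp)

lemma lind_CX: "\<not> deriv T \<psi> \<Longrightarrow> \<exists>D\<in>CX. T \<subseteq> D \<and> \<psi> \<notin> D"
  using lindenbaum unfolding CX_def by blast

lemma imp_L:
  assumes "\<forall>\<Theta>\<in>CX. \<phi>\<in>\<Theta> \<longrightarrow> \<phi>'\<in>\<Theta>"
  shows "Imp \<phi> \<phi>' \<in> ICK_id"
proof (rule ccontr)
  assume "Imp \<phi> \<phi>' \<notin> ICK_id"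
  then have "\<not> deriv {} (Imp \<phi> \<phi>')" using deriv_empty by blast
  then have "\<not> deriv (insert \<phi> {}) \<phi>'" using deduction by blast
  then obtain D where "D\<in>CX" "insert \<phi> {} \<subseteq> D" "\<phi>' \<notin> D" using lind_CX by blast
  then show False using assms by blast
qed

lemma iff_L:
  assumes "{\<Theta>\<in>CX. \<phi>\<in>\<Theta>} = {\<Theta>\<in>CX. \<phi>'\<in>\<Theta>}"
  shows "Iff \<phi> \<phi>' \<in> ICK_id"
proof -
  have "Imp \<phi> \<phi>' \<in> ICK_id" "Imp \<phi>' \<phi> \<in> ICK_id" using imp_L assms by blast+
  then have "deriv {} (Iff \<phi> \<phi>')" by (simp add: dIffI d_L)
  then show ?thesis by (rule deriv_empty)
qed

lemma L_top_iff: "\<chi> \<in> ICK_id \<Longrightarrow> Iff \<chi> Top \<in> ICK_id"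
proof -
  assume c: "\<chi> \<in> ICK_id"
  have "deriv {} (Imp \<chi> Top)" by (rule deduction, rule d_L, rule L_Top)
  moreover have "deriv {} (Imp Top \<chi>)" by (rule deduction, rule d_L, rule c)
  ultimately show ?thesis using dIffI deriv_empty by blast
qed

lemma condS:
  assumes T: "T \<in> CX"
  shows "deriv {\<chi>. Cond \<phi> \<chi> \<in> T} \<psi> \<Longrightarrow> Cond \<phi> \<psi> \<in> T"
proof (induction rule: deriv.induct)
  case (d_L \<chi>)
  have "Cond \<phi> Top \<in> T"
    by (meson CX_deriv CX_L L_N L_Top T dIffE2 d_L d_hyp)
  moreover have "Iff (Cond \<phi> \<chi>) (Cond \<phi> Top) \<in> ICK_id" by (rule L_cong_r[OF L_top_iff[OF d_L]])
  ultimately show ?case by (meson CX_deriv T dIffE2 deriv.d_L d_hyp)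
next
  case (d_hyp \<chi>)
  then show ?case by simp
next
  case (d_mp a b)
  have "And (Cond \<phi> (Imp a b)) (Cond \<phi> a) \<in> T" using d_mp.IH CX_and[OF T] by blast
  then have "Cond \<phi> (And (Imp a b) a) \<in> T"
    by (meson CX_deriv L_C T dIffE2 deriv.d_L d_hyp)
  moreover have "Imp (And (Imp a b) a) b \<in> ICK_id"
  proof -
    have "deriv {And (Imp a b) a} b"
      by (meson dAndE1 dAndE2 deriv.d_hyp deriv.d_mp singletonI)
    then show ?thesis using deduction deriv_empty by blast
  qed
  ultimately show ?case using CX_LI[OF T L_mono_cond] by blast
qed

lemma truth:
  "\<Gamma> \<in> CX \<Longrightarrow> sat CX (\<subseteq>) CR CV \<Gamma> \<phi> \<longleftrightarrow> \<phi> \<in> \<Gamma>"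
proof (induction \<phi> arbitrary: \<Gamma>)
  case (Atom n)
  then show ?case by (simp add: CV_def)
next
  case Bot
  then show ?case using CX_bot by simp
next
  case (And a b)
  then show ?case using CX_and by simp
next
  case (Or a b)
  then show ?case using CX_or by simp
next
  case (Imp a b)
  show ?case
  proof
    assume s: "sat CX (\<subseteq>) CR CV \<Gamma> (Imp a b)"
    show "Imp a b \<in> \<Gamma>"
    proof (rule ccontr)
      assume n: "Imp a b \<notin> \<Gamma>"
      have "\<not> deriv (insert a \<Gamma>) b"
        using deduction CX_deriv[OF Imp.prems] n by blast
      then obtain D where D: "D \<in> CX" "insert a \<Gamma> \<subseteq> D" "b \<notin> D" using lind_CX by blast
      then have "sat CX (\<subseteq>) CR CV D a" using Imp.IH(1) by blast
      then have "sat CX (\<subseteq>) CR CV D b" using s D by auto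
      then show False using Imp.IH(2) D by blast
    qed
  next
    assume i: "Imp a b \<in> \<Gamma>"
    show "sat CX (\<subseteq>) CR CV \<Gamma> (Imp a b)"
    proof (unfold sat.simps, intro ballI impI)
      fix D assume D: "D \<in> CX" "\<Gamma> \<subseteq> D" "sat CX (\<subseteq>) CR CV D a"
      then have "a \<in> D" using Imp.IH(1) by blast
      then have "b \<in> D" using CX_mp[OF D(1)] i D(2) by blast
      then show "sat CX (\<subseteq>) CR CV D b" using Imp.IH(2) D(1) by blast
    qed
  qed
next
  case (Cond a b)
  have eqA: "{z\<in>CX. sat CX (\<subseteq>) CR CV z a} = {\<Theta>\<in>CX. a\<in>\<Theta>}" using Cond.IH(1) by blast
  show ?case
  proof
    assume s: "sat CX (\<subseteq>) CR CV \<Gamma> (Cond a b)"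
    show "Cond a b \<in> \<Gamma>"
    proof (rule ccontr)
      assume n: "Cond a b \<notin> \<Gamma>"
      have "\<not> deriv {\<chi>. Cond a \<chi> \<in> \<Gamma>} b" using condS[OF Cond.prems] n by blast
      then obtain D where D: "D \<in> CX" "{\<chi>. Cond a \<chi> \<in> \<Gamma>} \<subseteq> D" "b \<notin> D" using lind_CX by blast
      have "CR {\<Theta>\<in>CX. a\<in>\<Theta>} \<Gamma> D" unfolding CR_def using Cond.prems D by blast
      then have "sat CX (\<subseteq>) CR CV D b" using s eqA by simp
      then show False using Cond.IH(2) D by blast
    qed
  next
    assume i: "Cond a b \<in> \<Gamma>"
    have "sat CX (\<subseteq>) CR CV D b" if r: "CR {\<Theta>\<in>CX. a\<in>\<Theta>} \<Gamma> D" for D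
    proof -
      obtain a' where D: "D \<in> CX" "{\<Theta>\<in>CX. a\<in>\<Theta>} = {\<Theta>\<in>CX. a'\<in>\<Theta>}" "\<forall>\<psi>. Cond a' \<psi> \<in> \<Gamma> \<longrightarrow> \<psi> \<in> D"
        using r unfolding CR_def by blast
      have "Iff (Cond a b) (Cond a' b) \<in> ICK_id" by (rule L_cong_l[OF iff_L[OF D(2)]])
      then have "Cond a' b \<in> \<Gamma>" using i by (meson CX_deriv Cond.prems dIffE1 deriv.d_L d_hyp)
      then have "b \<in> D" using D(3) by blast
      then show ?thesis using Cond.IH(2) D(1) by blast
    qed
    then show "sat CX (\<subseteq>) CR CV \<Gamma> (Cond a b)" using eqA by simp
  qed
qed



lemma canon_upsetV: "upset CX (\<subseteq>) (CV n)"
  unfolding upset_def CV_def by blast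

lemma canon_id_frame:
  assumes ne: "CX \<noteq> {}"
  shows "id_frame CX (\<subseteq>) CR"
proof -
  have cf: "cond_frame CX (\<subseteq>) CR"
    unfolding cond_frame_def
  proof (intro conjI ne ballI allI impI)
    fix a x y assume "upset CX (\<subseteq>) a" "CR a x y"
    then show "x \<in> CX" "y \<in> CX" unfolding CR_def by blast+
  next
    fix a x x' y' assume "upset CX (\<subseteq>) a" "x \<in> CX" "x' \<in> CX" "y' \<in> CX" "x \<subseteq> x'" "CR a x' y'"
    then have "CR a x y'" unfolding CR_def by blast
    then show "\<exists>y\<in>CX. CR a x y \<and> y \<subseteq> y'" using \<open>y' \<in> CX\<close> by blast
  qed auto
  have sub: "{y. CR a x y} \<subseteq> a" for a x
  proof
    fix y assume "y \<in> {y. CR a x y}"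
    then obtain \<phi> where y: "x \<in> CX" "y \<in> CX" "a = {\<Theta>\<in>CX. \<phi>\<in>\<Theta>}" "\<forall>\<psi>. Cond \<phi> \<psi> \<in> x \<longrightarrow> \<psi> \<in> y"
      unfolding CR_def by blast
    have "Cond \<phi> \<phi> \<in> x" using CX_L[OF y(1) L_id] .
    then show "y \<in> a" using y by blast
  qed
  show ?thesis unfolding id_frame_def
    by (intro conjI cf allI impI ballI sub)
qed

lemma valid_frame_eq: "valid_frame X le R \<phi> = valid X le R \<phi>"
  unfolding valid_frame_def valid_def by simp

lemma completeness:
  assumes v: "valid_class TYPE(form set) \<phi>"
  shows "\<phi> \<in> ICK_id"
proof (rule ccontr)
  assume n: "\<phi> \<notin> ICK_id"
  then have "\<not> deriv {} \<phi>" using deriv_empty by blast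
  then obtain D where D: "D \<in> CX" "\<phi> \<notin> D" using lind_CX by blast
  then have idf: "id_frame CX (\<subseteq>) CR" using canon_id_frame by blast
  have h: "\<forall>(X::form set set) le R. id_frame X le R \<longrightarrow> valid_frame X le R \<phi>"
    using v unfolding valid_class_def .
  have "valid_frame CX (\<subseteq>) CR \<phi>" by (rule HOL.mp[OF spec[OF spec[OF spec[OF h, of CX], of "(\<subseteq>)"], of CR] idf])
  then have "valid CX (\<subseteq>) CR \<phi>" by (simp add: valid_frame_eq)
  moreover have "\<forall>n. upset CX (\<subseteq>) (CV n)" using canon_upsetV by (rule allI)
  ultimately have "sat CX (\<subseteq>) CR CV D \<phi>" by (rule validD[OF _ _ D(1)])
  then show False using truth D by blast
qed

lemma sound_class: "\<phi> \<in> ICK_id \<Longrightarrow> valid_class TYPE('w) \<phi>"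
  unfolding valid_class_def valid_frame_eq
proof (intro allI impI)
  fix X :: "'w set" and le R assume "\<phi> \<in> ICK_id" "id_frame X le R"
  then show "valid X le R \<phi>" by (intro soundness)
qed

theorem proposition5p4:
  shows "(\<phi> \<in> ICK_id \<longrightarrow> valid_class TYPE('w) \<phi>)
       \<and> (\<phi> \<in> ICK_id \<longleftrightarrow> valid_class TYPE(form set) \<phi>)"
proof (intro conjI)
  show "\<phi> \<in> ICK_id \<longrightarrow> valid_class TYPE('w) \<phi>" by (rule impI, rule sound_class)
  show "\<phi> \<in> ICK_id \<longleftrightarrow> valid_class TYPE(form set) \<phi>"
  proof
    assume "\<phi> \<in> ICK_id" then show "valid_class TYPE(form set) \<phi>" by (rule sound_class)
  next
    assume "valid_class TYPE(form set) \<phi>" then show "\<phi> \<in> ICK_id" by (rule completeness)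
  qed
qed


end
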